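(* Let $\kappa$ be a regular infinite cardinal and let $B$ be an infinite Boolean algebra with the $\kappa$-FN. Then $|B|\le \mathrm{Ind}(B)^{<\kappa}$. In particular, every infinite Boolean algebra $B$ with the weak Freese–Nation property satisfies $|B|\le\mathrm{Ind}(B)^{\aleph_0}$.
   Context: For an infinite cardinal $\kappa$, a Boolean algebra $B$ has the $\kappa$-Freese–Nation property ($\kappa$-FN) if there is a map $f:B\to[B]^{<\kappa}$ such that for all $a,b\in B$ with $a\le b$ there is $c\in f(a)\cap f(b)$ with $a\le c\le b$; the weak Freese–Nation property is the $\aleph_1$-FN. $\mathrm{Ind}(B)$ is the supremum of the cardinalities of independent subsets of $B$, where $Y\subseteq B$ is independent if every elementary product $y_0^{\epsilon_0}\cdots y_{n-1}^{\epsilon_{n-1}}$ of finitely many distinct $y_i\in Y$ ($y^1=y$, $y^0=-y$) is nonzero. *)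

theory Defs
  imports Main
begin

unbundle cardinal_syntax

text \<open>The supremum of the cardinals |A i| (i in I), represented by a subset of the
  disjoint union Sigma I A (every cardinal below that union is realised there):
  a subset that is an upper bound of all |A i| and is below every other such
  upper bound.\<close>

definition csup :: "'i set \<Rightarrow> ('i \<Rightarrow> 'b set) \<Rightarrow> ('i \<times> 'b) set" where
  "csup I A = (SOME T. T \<subseteq> Sigma I A \<and> (\<forall>i\<in>I. |A i| \<le>o |T| ) \<and>
      (\<forall>T'. T' \<subseteq> Sigma I A \<and> (\<forall>i\<in>I. |A i| \<le>o |T'| ) \<longrightarrow> |T| \<le>o |T'| ))"

definition el_prod :: "'a::boolean_algebra set \<Rightarrow> ('a \<Rightarrow> bool) \<Rightarrow> 'a" where
  "el_prod F eps = Finite_Set.fold (\<lambda>y acc. inf (if eps y then y else - y) acc) top F"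

definition independent :: "'a::boolean_algebra set \<Rightarrow> bool" where
  "independent Y \<longleftrightarrow> (\<forall>F eps. finite F \<and> F \<subseteq> Y \<longrightarrow> el_prod F eps \<noteq> bot)"

text \<open>Ind(B) for B = UNIV :: 'a set, as a set whose cardinality is the supremum
  of the cardinalities of independent subsets.\<close>
definition Ind_set :: "'a::boolean_algebra itself \<Rightarrow> ('a set \<times> 'a) set" where
  "Ind_set _ = csup {Y :: 'a set. independent Y} (\<lambda>Y. Y)"

text \<open>lambda^{<kappa} = sup of lambda^mu over cardinals mu < kappa, where
  lambda = |L| and mu ranges over the cardinals of subsets of Field kappa.\<close>
definition cpow_less :: "'b set \<Rightarrow> 'k rel \<Rightarrow> ('k set \<times> ('k \<Rightarrow> 'b)) set" where
  "cpow_less L \<kappa> = csup {M. M \<subseteq> Field \<kappa> \<and> |M| <o \<kappa>} (\<lambda>M. Func M L)"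

definition kappa_FN :: "'k rel \<Rightarrow> 'a::boolean_algebra itself \<Rightarrow> bool" where
  "kappa_FN \<kappa> _ \<longleftrightarrow> (\<exists>f :: 'a \<Rightarrow> 'a set. (\<forall>a. |f a| <o \<kappa>) \<and>
      (\<forall>a b. a \<le> b \<longrightarrow> (\<exists>c \<in> f a \<inter> f b. a \<le> c \<and> c \<le> b)))"

end

theory Submission
  imports Defs
begin


declare bot_unique[simp] top_unique[simp]

definition sg :: "('a::boolean_algebra \<Rightarrow> bool) \<Rightarrow> 'a \<Rightarrow> 'a" where
  "sg eps y = (if eps y then y else - y)"

lemma el_prod_empty[simp]: "el_prod {} eps = top"
  by (simp add: el_prod_def)

lemma el_prod_insert:
  assumes "finite F" "y \<notin> F"
  shows "el_prod (insert y F) eps = inf (sg eps y) (el_prod F eps)"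
proof -
  interpret comp_fun_commute "\<lambda>y acc. inf (if eps y then y else - y) acc"
    by standard (auto simp: fun_eq_iff inf_left_commute)
  show ?thesis using assms by (simp add: el_prod_def sg_def)
qed

lemma el_prod_remove:
  assumes "finite F" "y \<in> F"
  shows "el_prod F eps = inf (sg eps y) (el_prod (F - {y}) eps)"
  using el_prod_insert[of "F - {y}" y eps] assms by (simp add: insert_absorb)

lemma le_el_prod:
  assumes "finite F"
  shows "x \<le> el_prod F eps \<longleftrightarrow> (\<forall>y\<in>F. x \<le> sg eps y)"
  using assms by (induction F rule: finite_induct) (auto simp: el_prod_insert)

lemma el_prod_le_sg:
  assumes "finite F" "w \<in> F"
  shows "el_prod F eps \<le> sg eps w"
  using le_el_prod[OF assms(1), of "el_prod F eps" eps] assms(2) by auto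

lemma el_prod_cong:
  assumes "finite F" "\<forall>y\<in>F. eps y = eps' y"
  shows "el_prod F eps = el_prod F eps'"
  using assms by (induction F rule: finite_induct) (auto simp: el_prod_insert sg_def)

inductive_set gen :: "'a::boolean_algebra set \<Rightarrow> 'a set" for X where
  gen_base: "x \<in> X \<Longrightarrow> x \<in> gen X"
| gen_top: "top \<in> gen X"
| gen_inf: "x \<in> gen X \<Longrightarrow> y \<in> gen X \<Longrightarrow> inf x y \<in> gen X"
| gen_sup: "x \<in> gen X \<Longrightarrow> y \<in> gen X \<Longrightarrow> sup x y \<in> gen X"
| gen_neg: "x \<in> gen X \<Longrightarrow> - x \<in> gen X"

lemma gen_mono: "X \<subseteq> Y \<Longrightarrow> gen X \<subseteq> gen Y"
proof
  fix x assume XY: "X \<subseteq> Y" and "x \<in> gen X"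
  from \<open>x \<in> gen X\<close> show "x \<in> gen Y" by (induction rule: gen.induct) (use XY in \<open>auto intro: gen.intros\<close>)
qed

lemma gen_closed:
  assumes "X \<subseteq> A" "top \<in> A" "\<And>x y. x \<in> A \<Longrightarrow> y \<in> A \<Longrightarrow> inf x y \<in> A"
    "\<And>x y. x \<in> A \<Longrightarrow> y \<in> A \<Longrightarrow> sup x y \<in> A" "\<And>x. x \<in> A \<Longrightarrow> - x \<in> A"
  shows "gen X \<subseteq> A"
proof
  fix x assume "x \<in> gen X"
  then show "x \<in> A" by (induction rule: gen.induct) (use assms in auto)
qed

lemma el_prod_gen:
  assumes "finite F" "F \<subseteq> X"
  shows "el_prod F eps \<in> gen X"
  using assms by (induction F rule: finite_induct)
    (auto simp: el_prod_insert sg_def intro: gen.intros)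

definition good :: "'a::boolean_algebra set \<Rightarrow> 'a set \<Rightarrow> 'a set \<Rightarrow> 'a \<Rightarrow> bool" where
  "good D U S y \<longleftrightarrow> (\<forall>d\<in>D. d \<le> y) \<and> (\<forall>u\<in>U. y \<le> u) \<and> y \<notin> D \<and> y \<notin> U \<and>
     (\<forall>a\<in>gen (S \<union> D \<union> U). (a \<le> y \<longrightarrow> (\<exists>d\<in>D. a \<le> d)) \<and> (y \<le> a \<longrightarrow> (\<exists>u\<in>U. u \<le> a)))"

definition fam :: "'a::boolean_algebra set \<Rightarrow> 'a set \<Rightarrow> ('a \<times> 'a set) set set" where
  "fam D U = {Phi. (\<forall>y S S'. (y,S) \<in> Phi \<longrightarrow> (y,S') \<in> Phi \<longrightarrow> S = S') \<and>
     (\<forall>y S. (y,S) \<in> Phi \<longrightarrow> good D U S y) \<and>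
     (\<forall>F. finite F \<and> F \<noteq> {} \<and> F \<subseteq> Domain Phi \<longrightarrow> (\<exists>y\<in>F. \<exists>S. (y,S) \<in> Phi \<and> F - {y} \<subseteq> S))}"

lemma good_D: "good D U S y \<Longrightarrow> d \<in> D \<Longrightarrow> d \<le> y" by (simp add: good_def)
lemma good_U: "good D U S y \<Longrightarrow> u \<in> U \<Longrightarrow> y \<le> u" by (simp add: good_def)
lemma good_nD: "good D U S y \<Longrightarrow> y \<notin> D" by (simp add: good_def)
lemma good_nU: "good D U S y \<Longrightarrow> y \<notin> U" by (simp add: good_def)
lemma good_cut1: "good D U S y \<Longrightarrow> a \<in> gen (S \<union> D \<union> U) \<Longrightarrow> a \<le> y \<Longrightarrow> \<exists>d\<in>D. a \<le> d"
  by (simp add: good_def)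
lemma good_cut2: "good D U S y \<Longrightarrow> a \<in> gen (S \<union> D \<union> U) \<Longrightarrow> y \<le> a \<Longrightarrow> \<exists>u\<in>U. u \<le> a"
  by (simp add: good_def)

lemma famD1: "Phi \<in> fam D U \<Longrightarrow> (y,S) \<in> Phi \<Longrightarrow> (y,S') \<in> Phi \<Longrightarrow> S = S'"
  unfolding fam_def mem_Collect_eq by (drule conjunct1) blast
lemma famD2: "Phi \<in> fam D U \<Longrightarrow> (y,S) \<in> Phi \<Longrightarrow> good D U S y"
  unfolding fam_def mem_Collect_eq by (drule conjunct2, drule conjunct1) blast
lemma famD3: "Phi \<in> fam D U \<Longrightarrow> finite F \<Longrightarrow> F \<noteq> {} \<Longrightarrow> F \<subseteq> Domain Phi \<Longrightarrow> \<exists>y\<in>F. \<exists>S. (y,S) \<in> Phi \<and> F - {y} \<subseteq> S"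
  unfolding fam_def mem_Collect_eq by (drule conjunct2, drule conjunct2) blast

lemma fam_indep_aux:
  fixes D U :: "'a::boolean_algebra set"
  assumes Phi: "Phi \<in> fam D U" and nt: "top \<noteq> (bot::'a)"
  shows "finite F \<Longrightarrow> F \<subseteq> Domain Phi \<Longrightarrow>
     (\<forall>eps. el_prod F eps \<noteq> bot) \<and> (F \<noteq> {} \<longrightarrow> el_prod F (\<lambda>_. True) \<notin> D \<and> - el_prod F (\<lambda>_. False) \<notin> U)"
proof (induction "card F" arbitrary: F rule: less_induct)
  case less
  note gd = famD2[OF Phi] and mx = famD3[OF Phi]
  have bnd: "(\<forall>d\<in>D. d \<le> z) \<and> (\<forall>u\<in>U. z \<le> u)" if zD: "z \<in> Domain Phi" for z
  proof -
    obtain S where "(z,S) \<in> Phi" using zD by blast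
    then have "good D U S z" by (rule gd)
    then show ?thesis using good_D good_U by blast
  qed
  show ?case
  proof (cases "F = {}")
    case True then show ?thesis using nt by (simp add: eq_commute)
  next
    case False
    obtain y S where yF: "y \<in> F" and yS: "(y,S) \<in> Phi" and sub: "F - {y} \<subseteq> S"
      using mx[OF less.prems(1) False less.prems(2)] by blast
    define F' where "F' = F - {y}"
    have fF': "finite F'" using less.prems(1) F'_def by simp
    have cF': "card F' < card F" using card_Diff1_less[OF less.prems(1) yF] F'_def by simp
    have F'dom: "F' \<subseteq> Domain Phi" using less.prems(2) F'_def by auto
    have IH: "(\<forall>eps. el_prod F' eps \<noteq> bot) \<and> (F' \<noteq> {} \<longrightarrow> el_prod F' (\<lambda>_. True) \<notin> D \<and> - el_prod F' (\<lambda>_. False) \<notin> U)"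
      using less.hyps[OF cF' fF' F'dom] by simp
    have g: "good D U S y" using gd[OF yS] .
    have yD: "\<forall>d\<in>D. d \<le> y" using good_D[OF g] by blast
    have yU: "\<forall>u\<in>U. y \<le> u" using good_U[OF g] by blast
    have ynD: "y \<notin> D" using good_nD[OF g] .
    have ynU: "y \<notin> U" using good_nU[OF g] .
    note cut1 = good_cut1[OF g] and cut2 = good_cut2[OF g]
    have Fe: "\<And>eps. el_prod F eps = inf (sg eps y) (el_prod F' eps)"
      unfolding F'_def by (rule el_prod_remove[OF less.prems(1) yF])
    have F'S: "F' \<subseteq> S \<union> D \<union> U" using sub F'_def by auto
    have pgen: "\<And>eps. el_prod F' eps \<in> gen (S \<union> D \<union> U)"
      by (rule el_prod_gen[OF fF' F'S])
    have F'bnd: "\<And>z. z \<in> F' \<Longrightarrow> (\<forall>d\<in>D. d \<le> z) \<and> (\<forall>u\<in>U. z \<le> u)"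
      using bnd F'dom by (meson subsetD)
    have part1: "el_prod F eps \<noteq> bot" for eps
    proof
      assume z: "el_prod F eps = bot"
      define p where "p = el_prod F' eps"
      show False
      proof (cases "eps y")
        case True
        then have "inf y p = bot" using z Fe p_def by (simp add: sg_def)
        then have "y \<le> - p" by (simp add: inf_shunt)
        moreover have "- p \<in> gen (S \<union> D \<union> U)" using pgen p_def by (auto intro: gen_neg)
        ultimately obtain u where uU: "u \<in> U" and up: "u \<le> - p" using cut2 by blast
        show False
        proof (cases "\<exists>w\<in>F'. eps w")
          case True
          then obtain w where "w \<in> F'" "eps w" by blast
          then have "p \<le> w" using el_prod_le_sg[OF fF', of w eps] p_def by (simp add: sg_def)
          moreover have "w \<le> u" using F'bnd \<open>w \<in> F'\<close> uU by blast
          ultimately have "p \<le> u" by simp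
          moreover have "p \<le> - u" using up by (simp add: compl_le_swap1)
          ultimately have "p \<le> inf u (- u)" by (rule le_infI)
          then have "p = bot" by (simp add: bot_unique)
          then show False using IH p_def by auto
        next
          case False
          show False
          proof (cases "F' = {}")
            case True
            then have "u = bot" using up p_def by simp
            then have "y = u" using yU uU by force
            then show False using ynU uU by simp
          next
            case ne: False
            have pe: "p = el_prod F' (\<lambda>_. False)"
              using el_prod_cong[OF fF', of eps "\<lambda>_. False"] False p_def by auto
            have "- p \<le> u"
            proof -
              have "- u \<le> p" unfolding pe le_el_prod[OF fF'] sg_def
                using F'bnd uU by simp
              then show ?thesis by (simp add: compl_le_swap2)
            qed
            then have "- p = u" using up by simp
            then show False using IH ne uU pe by auto
          qed
        qed
      next
        case False
        then have "inf (- y) p = bot" using z Fe p_def by (simp add: sg_def)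
        then have "p \<le> y" by (simp add: inf_shunt inf_commute)
        moreover have "p \<in> gen (S \<union> D \<union> U)" using pgen p_def by auto
        ultimately obtain d where dD: "d \<in> D" and pd: "p \<le> d" using cut1 by blast
        show False
        proof (cases "\<exists>w\<in>F'. \<not> eps w")
          case True
          then obtain w where "w \<in> F'" "\<not> eps w" by blast
          then have "p \<le> - w" using el_prod_le_sg[OF fF', of w eps] p_def by (simp add: sg_def)
          moreover have "d \<le> w" using F'bnd \<open>w \<in> F'\<close> dD by blast
          ultimately have "p \<le> - d" using compl_mono order_trans by blast
          then have "p \<le> inf d (- d)" using pd by (intro le_infI)
          then have "p = bot" by (simp add: bot_unique)
          then show False using IH p_def by auto
        next
          case False
          show False
          proof (cases "F' = {}")
            case True
            then have "d = top" using pd p_def by (simp add: top_unique)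
            then have "y = d" using yD dD by force
            then show False using ynD dD by simp
          next
            case ne: False
            have pe: "p = el_prod F' (\<lambda>_. True)"
              using el_prod_cong[OF fF', of eps "\<lambda>_. True"] False p_def by auto
            have "d \<le> p" unfolding pe le_el_prod[OF fF'] sg_def
              using F'bnd dD by simp
            then have "p = d" using pd by simp
            then show False using IH ne dD pe by auto
          qed
        qed
      qed
    qed
    have part2: "el_prod F (\<lambda>_. True) \<notin> D"
    proof
      assume a: "el_prod F (\<lambda>_. True) \<in> D"
      define m where "m = el_prod F' (\<lambda>_. True)"
      have e: "inf y m \<in> D" using a Fe m_def by (simp add: sg_def)
      show False
      proof (cases "F' = {}")
        case True then show False using e ynD m_def by simp
      next
        case ne: False
        define d where "d = inf y m"
        have "y \<le> sup (- m) d"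
        proof -
          have "y = sup (inf y m) (inf y (- m))" by (simp add: inf_sup_distrib1[symmetric])
          also have "\<dots> \<le> sup d (- m)" unfolding d_def by (rule sup_mono) simp_all
          finally show ?thesis by (simp add: sup_commute)
        qed
        moreover have "sup (- m) d \<in> gen (S \<union> D \<union> U)"
          using pgen m_def e d_def by (auto intro: gen.intros)
        ultimately obtain u where uU: "u \<in> U" and ule: "u \<le> sup (- m) d" using cut2 by blast
        have mu: "m \<le> u"
        proof -
          obtain w where w: "w \<in> F'" using ne by blast
          have "m \<le> w" using el_prod_le_sg[OF fF' w, of "\<lambda>_. True"] m_def by (simp add: sg_def)
          moreover have "w \<le> u" using F'bnd w uU by blast
          ultimately show ?thesis by simp
        qed
        have "m \<le> d"
        proof -
          have "m = inf m u" using mu by (simp add: inf_absorb1)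
          also have "\<dots> \<le> inf m (sup (- m) d)" using ule by (rule inf_mono[OF order_refl])
          also have "\<dots> \<le> d" by (simp add: inf_sup_distrib1)
          finally show ?thesis .
        qed
        moreover have "d \<le> m" using F'bnd e d_def unfolding m_def le_el_prod[OF fF'] sg_def by simp
        ultimately have "m = d" by simp
        then show False using IH ne e d_def m_def by auto
      qed
    qed
    have part3: "- el_prod F (\<lambda>_. False) \<notin> U"
    proof
      assume a: "- el_prod F (\<lambda>_. False) \<in> U"
      define s where "s = - el_prod F' (\<lambda>_. False)"
      have e: "sup y s \<in> U" using a Fe s_def by (simp add: sg_def)
      show False
      proof (cases "F' = {}")
        case True then show False using e ynU s_def by simp
      next
        case ne: False
        define u where "u = sup y s"
        have "inf u (- s) \<le> y" unfolding u_def
          by (simp add: inf_sup_distrib2)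
        moreover have "inf u (- s) \<in> gen (S \<union> D \<union> U)"
          using pgen s_def e u_def by (auto intro: gen.intros)
        ultimately obtain d where dD: "d \<in> D" and dle: "inf u (- s) \<le> d" using cut1 by blast
        have ds: "d \<le> s"
        proof -
          obtain w where w: "w \<in> F'" using ne by blast
          have "el_prod F' (\<lambda>_. False) \<le> - w" using el_prod_le_sg[OF fF' w, of "\<lambda>_. False"] by (simp add: sg_def)
          then have "w \<le> s" unfolding s_def by (simp add: compl_le_swap1)
          moreover have "d \<le> w" using F'bnd w dD by blast
          ultimately show ?thesis by simp
        qed
        have "u \<le> s"
        proof -
          have "u = sup (inf u (- s)) (inf u s)" by (simp add: inf_sup_distrib1[symmetric])
          also have "\<dots> \<le> sup d s" using dle by (meson inf_le2 sup_mono)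
          also have "\<dots> = s" using ds by (simp add: sup_absorb2)
          finally show ?thesis .
        qed
        moreover have "s \<le> u"
        proof -
          have "- u \<le> el_prod F' (\<lambda>_. False)" unfolding le_el_prod[OF fF'] sg_def
          proof (intro ballI)
            fix z assume "z \<in> F'"
            then have "z \<le> u" using F'bnd e u_def by blast
            then show "- u \<le> (if False then z else - z)" by simp
          qed
          then show ?thesis unfolding s_def by (simp add: compl_le_swap2)
        qed
        ultimately have "s = u" by simp
        then show False using IH ne e u_def s_def by auto
      qed
    qed
    show ?thesis using part1 part2 part3 by blast
  qed
qed

lemma fam_indep:
  fixes D U :: "'a::boolean_algebra set"
  assumes "Phi \<in> fam D U" "top \<noteq> (bot::'a)"
  shows "independent (Domain Phi)"
  unfolding independent_def
proof (intro allI impI)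
  fix F eps assume "finite F \<and> F \<subseteq> Domain Phi"
  then show "el_prod F eps \<noteq> bot" using fam_indep_aux[OF assms, of F] by blast
qed


lemma famI:
  assumes "\<And>y S S'. (y,S) \<in> Phi \<Longrightarrow> (y,S') \<in> Phi \<Longrightarrow> S = S'"
    "\<And>y S. (y,S) \<in> Phi \<Longrightarrow> good D U S y"
    "\<And>F. finite F \<Longrightarrow> F \<noteq> {} \<Longrightarrow> F \<subseteq> Domain Phi \<Longrightarrow> \<exists>y\<in>F. \<exists>S. (y,S) \<in> Phi \<and> F - {y} \<subseteq> S"
  shows "Phi \<in> fam D U"
proof -
  have a: "\<forall>y S S'. (y,S) \<in> Phi \<longrightarrow> (y,S') \<in> Phi \<longrightarrow> S = S'" using assms(1) by blast
  have b: "\<forall>y S. (y,S) \<in> Phi \<longrightarrow> good D U S y" using assms(2) by blast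
  have c: "\<forall>F. finite F \<and> F \<noteq> {} \<and> F \<subseteq> Domain Phi \<longrightarrow> (\<exists>y\<in>F. \<exists>S. (y,S) \<in> Phi \<and> F - {y} \<subseteq> S)"
    using assms(3) by blast
  show ?thesis unfolding fam_def mem_Collect_eq using a b c by (intro conjI)
qed

lemma finite_in_chain_Domain:
  assumes "finite F" "chain\<^sub>\<subseteq> C" "C \<noteq> {}" "F \<subseteq> Domain (\<Union>C)"
  shows "\<exists>Phi\<in>C. F \<subseteq> Domain Phi"
  using assms
proof (induction F rule: finite_induct)
  case empty then show ?case by blast
next
  case (insert x F)
  then obtain P1 where P1: "P1 \<in> C" "F \<subseteq> Domain P1" by blast
  from insert.prems obtain P2 where P2: "P2 \<in> C" "x \<in> Domain P2" by blast
  from insert.prems(1) P1(1) P2(1) have "P1 \<subseteq> P2 \<or> P2 \<subseteq> P1" unfolding chain_subset_def by blast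
  then show ?case
  proof
    assume "P1 \<subseteq> P2" then have "insert x F \<subseteq> Domain P2" using P1 P2 by blast
    then show ?case using P2 by blast
  next
    assume "P2 \<subseteq> P1" then have "insert x F \<subseteq> Domain P1" using P1 P2 by blast
    then show ?case using P1 by blast
  qed
qed

lemma fam_Union:
  assumes C: "C \<in> chains (fam D U)"
  shows "\<Union>C \<in> fam D U"
proof -
  have sub: "C \<subseteq> fam D U" and ch: "chain\<^sub>\<subseteq> C" using C unfolding chains_def by auto
  have 1: "S = S'" if yy: "(y,S) \<in> \<Union>C" "(y,S') \<in> \<Union>C" for y S S'
  proof -
    obtain P1 P2 where "P1 \<in> C" "P2 \<in> C" "(y,S) \<in> P1" "(y,S') \<in> P2" using yy by blast
    moreover have "P1 \<subseteq> P2 \<or> P2 \<subseteq> P1" using ch calculation unfolding chain_subset_def by blast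
    ultimately show ?thesis using famD1 sub by (metis subsetD)
  qed
  have 2: "good D U S y" if "(y,S) \<in> \<Union>C" for y S
    using that sub famD2 by blast
  have 3: "\<exists>y\<in>F. \<exists>S. (y,S) \<in> \<Union>C \<and> F - {y} \<subseteq> S"
    if FF: "finite F" "F \<noteq> {}" "F \<subseteq> Domain (\<Union>C)" for F
  proof -
    have "C \<noteq> {}" using FF by auto
    then obtain P where P: "P \<in> C" "F \<subseteq> Domain P" using finite_in_chain_Domain[OF FF(1) ch _ FF(3)] by blast
    then have "P \<in> fam D U" using sub by blast
    from famD3[OF this FF(1,2) P(2)] obtain y S where "y \<in> F" "(y,S) \<in> P" "F - {y} \<subseteq> S" by blast
    then show ?thesis using P(1) by blast
  qed
  show ?thesis by (rule famI) (use 1 2 3 in auto)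
qed

lemma fam_max_ex: "\<exists>Phi\<in>fam D U. \<forall>Phi'\<in>fam D U. Phi \<subseteq> Phi' \<longrightarrow> Phi' = Phi"
  by (rule Zorn_Lemma) (use fam_Union in blast)

definition famax :: "'a::boolean_algebra set \<Rightarrow> 'a set \<Rightarrow> ('a \<times> 'a set) set" where
  "famax D U = (SOME Phi. Phi \<in> fam D U \<and> (\<forall>Phi'\<in>fam D U. Phi \<subseteq> Phi' \<longrightarrow> Phi' = Phi))"

lemma famax: "famax D U \<in> fam D U" "\<And>Phi'. Phi' \<in> fam D U \<Longrightarrow> famax D U \<subseteq> Phi' \<Longrightarrow> Phi' = famax D U"
proof -
  have "famax D U \<in> fam D U \<and> (\<forall>Phi'\<in>fam D U. famax D U \<subseteq> Phi' \<longrightarrow> Phi' = famax D U)"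
    unfolding famax_def by (rule someI_ex) (use fam_max_ex in blast)
  then show "famax D U \<in> fam D U" "\<And>Phi'. Phi' \<in> fam D U \<Longrightarrow> famax D U \<subseteq> Phi' \<Longrightarrow> Phi' = famax D U"
    by blast+
qed

lemma fam_extend:
  assumes Phi: "Phi \<in> fam D U" and b: "b \<notin> Domain Phi" and g: "good D U (Domain Phi) b"
  shows "insert (b, Domain Phi) Phi \<in> fam D U"
proof -
  let ?P = "insert (b, Domain Phi) Phi"
  have 1: "S = S'" if "(y,S) \<in> ?P" "(y,S') \<in> ?P" for y S S'
    using that famD1[OF Phi] b by blast
  have 2: "good D U S y" if "(y,S) \<in> ?P" for y S
    using that famD2[OF Phi] g by blast
  have 3: "\<exists>y\<in>F. \<exists>S. (y,S) \<in> ?P \<and> F - {y} \<subseteq> S"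
    if F: "finite F" "F \<noteq> {}" "F \<subseteq> Domain ?P" for F
  proof (cases "b \<in> F")
    case True
    have "F - {b} \<subseteq> Domain Phi" using F(3) by auto
    then show ?thesis using True by blast
  next
    case False
    then have "F \<subseteq> Domain Phi" using F(3) by auto
    from famD3[OF Phi F(1,2) this] show ?thesis by blast
  qed
  show ?thesis by (rule famI) (use 1 2 3 in auto)
qed




definition Ik :: "'k rel \<Rightarrow> 'k set set" where
  "Ik \<kappa> = {M. M \<subseteq> Field \<kappa> \<and> |M| <o \<kappa>}"

definition WW :: "'k rel \<Rightarrow> 'l set \<Rightarrow> ('k set \<times> ('k \<Rightarrow> 'l)) set" where
  "WW \<kappa> L = Sigma (Ik \<kappa>) (\<lambda>M. Func M L)"

lemma finite_small:
  assumes "Card_order \<kappa>" "\<not> finite (Field \<kappa>)" "finite A"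
  shows "|A| <o \<kappa>"
proof -
  have wo: "Well_order \<kappa>" using assms(1) unfolding card_order_on_def by simp
  show ?thesis by (rule finite_ordLess_infinite[OF card_of_Well_order wo]) (use assms in \<open>auto simp: Field_card_of\<close>)
qed

lemma small_insert:
  assumes "Card_order \<kappa>" "\<not> finite (Field \<kappa>)" "|A| <o \<kappa>"
  shows "|insert a A| <o \<kappa>"
proof -
  have "|{a}| <o \<kappa>" using finite_small[OF assms(1,2), of "{a}"] by simp
  then have "|{a} \<union> A| <o \<kappa>" by (rule card_of_Un_ordLess_infinite_Field[OF assms(2,1) _ assms(3)])
  then show ?thesis by simp
qed

lemma small_Un:
  assumes "Card_order \<kappa>" "\<not> finite (Field \<kappa>)" "|A| <o \<kappa>" "|B| <o \<kappa>"
  shows "|A \<union> B| <o \<kappa>"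
  by (rule card_of_Un_ordLess_infinite_Field[OF assms(2,1) assms(3,4)])

lemma small_subset:
  assumes "|B| <o \<kappa>" "A \<subseteq> B"
  shows "|A| <o \<kappa>"
  by (rule ordLeq_ordLess_trans[OF card_of_mono1[OF assms(2)] assms(1)])

lemma small_image:
  assumes "|A| <o \<kappa>"
  shows "|h ` A| <o \<kappa>"
  by (rule ordLeq_ordLess_trans[OF card_of_image assms])

lemma inj_into_Field:
  assumes "Card_order \<kappa>" "|A| \<le>o \<kappa>"
  shows "\<exists>h. inj_on h A \<and> h ` A \<subseteq> Field \<kappa>"
proof -
  have "|A| \<le>o |Field \<kappa>|"
    by (rule ordLeq_ordIso_trans[OF assms(2) ordIso_symmetric[OF card_of_Field_ordIso[OF assms(1)]]])
  from this[unfolded card_of_ordLeq[symmetric]] show ?thesis .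
qed

lemma Func_mono_cod:
  assumes "|X| \<le>o |Y|"
  shows "|Func M X| \<le>o |Func M Y|"
proof -
  obtain e where e: "inj_on e X" "e ` X \<subseteq> Y" using assms[unfolded card_of_ordLeq[symmetric]] by blast
  let ?F = "\<lambda>g x. if x \<in> M then e (g x) else undefined"
  have "inj_on ?F (Func M X)"
  proof (rule inj_onI)
    fix g1 g2 assume g: "g1 \<in> Func M X" "g2 \<in> Func M X" "?F g1 = ?F g2"
    show "g1 = g2"
    proof
      fix x show "g1 x = g2 x"
      proof (cases "x \<in> M")
        case True
        then have "e (g1 x) = e (g2 x)" using fun_cong[OF g(3), of x] by simp
        moreover have "g1 x \<in> X" "g2 x \<in> X" using g True unfolding Func_def by auto
        ultimately show ?thesis using e(1) by (simp add: inj_on_eq_iff)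
      next
        case False then show ?thesis using g unfolding Func_def by auto
      qed
    qed
  qed
  moreover have "?F ` Func M X \<subseteq> Func M Y" using e(2) unfolding Func_def by auto
  ultimately show ?thesis unfolding card_of_ordLeq[symmetric] by blast
qed


lemma card_le_infinite_self:
  assumes "\<not> finite K" "|A| \<le>o |K|" "finite B"
  shows "|A \<union> B| \<le>o |K|"
proof -
  have "|B| <o |K|"
    by (rule finite_ordLess_infinite[OF card_of_Well_order card_of_Well_order]) (use assms in \<open>auto simp: Field_card_of\<close>)
  then have "|B| \<le>o |K|" by (rule ordLess_imp_ordLeq)
  then show ?thesis
    using card_of_Un_ordLeq_infinite_Field[of "|K|" A B] assms(1,2) card_of_card_order_on[of K]
    by (simp add: Field_card_of)
qed

lemma option_inj_Field:
  assumes "\<not> finite K"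
  shows "\<exists>\<phi>. inj_on \<phi> (K \<times> insert None (Some ` K)) \<and> \<phi> ` (K \<times> insert None (Some ` K)) \<subseteq> K"
proof -
  have "|Some ` K \<union> {None}| \<le>o |K|"
    by (rule card_le_infinite_self[OF assms card_of_image]) simp
  then have o: "|insert None (Some ` K)| \<le>o |K|" by simp
  have "|K \<times> insert None (Some ` K)| \<le>o |K|"
    by (rule card_of_Sigma_ordLeq_infinite[OF assms]) (use o in \<open>auto intro: ordLeq_refl card_of_Card_order\<close>)
  from this[unfolded card_of_ordLeq[symmetric]] show ?thesis .
qed

lemma enc_bound:
  assumes C: "Card_order \<kappa>" and inf: "\<not> finite (Field \<kappa>)" and st: "stable \<kappa>" and l0: "l0 \<in> L"
  shows "|Sigma (Ik \<kappa>) (\<lambda>M. Func M (WW \<kappa> L))| \<le>o |WW \<kappa> L|"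
proof -
  let ?K = "Field \<kappa>"
  let ?DOM = "?K \<times> insert None (Some ` ?K)"
  obtain \<phi> where phi: "inj_on \<phi> ?DOM" "\<phi> ` ?DOM \<subseteq> ?K" using option_inj_Field[OF inf] by blast
  define Ms where "Ms M g = {(m, None) | m. m \<in> M} \<union> {(m, Some x) | m x. m \<in> M \<and> x \<in> fst (g m)}"
    for M :: "'a set" and g :: "'a \<Rightarrow> 'a set \<times> ('a \<Rightarrow> 'b)"
  define hv where "hv M g z = (if z \<in> \<phi> ` Ms M g then (case inv_into (Ms M g) \<phi> z of (m, None) \<Rightarrow> l0 | (m, Some x) \<Rightarrow> snd (g m) x) else undefined)"
    for M g z
  define enc where "enc p = (\<phi> ` Ms (fst p) (snd p), hv (fst p) (snd p))" for p
  have MsN: "(m, None) \<in> Ms M g \<longleftrightarrow> m \<in> M" for m M g unfolding Ms_def by auto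
  have MsS: "(m, Some x) \<in> Ms M g \<longleftrightarrow> m \<in> M \<and> x \<in> fst (g m)" for m x M g unfolding Ms_def by auto
  let ?S = "Sigma (Ik \<kappa>) (\<lambda>M. Func M (WW \<kappa> L))"
  have gm: "fst (g m) \<in> Ik \<kappa> \<and> snd (g m) \<in> Func (fst (g m)) L" if "(M,g) \<in> ?S" "m \<in> M" for M g m
  proof -
    have "g m \<in> WW \<kappa> L" using that unfolding Func_def by auto
    then show ?thesis unfolding WW_def by (cases "g m") auto
  qed
  have MsDOM: "Ms M g \<subseteq> ?DOM" if "(M,g) \<in> ?S" for M g
  proof
    fix p assume p: "p \<in> Ms M g"
    have MK: "M \<subseteq> ?K" using that unfolding Ik_def by auto
    show "p \<in> ?DOM"
    proof (cases p)
      case (Pair m oo)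
      show ?thesis
      proof (cases oo)
        case None then show ?thesis using p Pair MK MsN by auto
      next
        case (Some x)
        then have "m \<in> M" "x \<in> fst (g m)" using p Pair MsS by auto
        then have "x \<in> ?K" using gm[OF that] unfolding Ik_def by auto
        then show ?thesis using Pair Some \<open>m \<in> M\<close> MK by auto
      qed
    qed
  qed
  have injMs: "inj_on \<phi> (Ms M g)" if "(M,g) \<in> ?S" for M g
    using inj_on_subset[OF phi(1) MsDOM[OF that]] .
  have hvS: "hv M g (\<phi> (m, Some x)) = snd (g m) x" if "(M,g) \<in> ?S" "m \<in> M" "x \<in> fst (g m)" for M g m x
  proof -
    have p: "(m, Some x) \<in> Ms M g" using that MsS by auto
    then have "inv_into (Ms M g) \<phi> (\<phi> (m, Some x)) = (m, Some x)" using inv_into_f_f[OF injMs[OF that(1)] p] by simp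
    then show ?thesis unfolding hv_def using p by simp
  qed
  have inj: "inj_on enc ?S"
  proof (rule inj_onI)
    fix p1 p2 assume p1: "p1 \<in> ?S" and p2: "p2 \<in> ?S" and eq: "enc p1 = enc p2"
    obtain M1 g1 where P1: "p1 = (M1, g1)" by (cases p1)
    obtain M2 g2 where P2: "p2 = (M2, g2)" by (cases p2)
    have S1: "(M1,g1) \<in> ?S" and S2: "(M2,g2) \<in> ?S" using p1 p2 P1 P2 by auto
    have "\<phi> ` Ms M1 g1 = \<phi> ` Ms M2 g2" using eq P1 P2 unfolding enc_def by simp
    then have MsE: "Ms M1 g1 = Ms M2 g2" using inj_on_image_eq_iff[OF phi(1) MsDOM[OF S1] MsDOM[OF S2]] by simp
    have hvE: "hv M1 g1 = hv M2 g2" using eq P1 P2 unfolding enc_def by simp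
    have ME: "M1 = M2" using MsE MsN by blast
    have "g1 m = g2 m" for m
    proof (cases "m \<in> M1")
      case True
      then have m2: "m \<in> M2" using ME by simp
      have fE: "fst (g1 m) = fst (g2 m)" using MsE MsS True m2 by blast
      have "snd (g1 m) x = snd (g2 m) x" for x
      proof (cases "x \<in> fst (g1 m)")
        case True
        have "snd (g1 m) x = hv M1 g1 (\<phi> (m, Some x))" using hvS[OF S1 \<open>m \<in> M1\<close> True] by simp
        also have "\<dots> = hv M2 g2 (\<phi> (m, Some x))" using hvE by simp
        also have "\<dots> = snd (g2 m) x" using hvS[OF S2 m2] True fE by simp
        finally show ?thesis .
      next
        case False
        then have "x \<notin> fst (g2 m)" using fE by simp
        then show ?thesis using False gm[OF S1 \<open>m \<in> M1\<close>] gm[OF S2 m2] unfolding Func_def by auto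
      qed
      then have "snd (g1 m) = snd (g2 m)" by (rule ext)
      then show ?thesis using fE by (simp add: prod_eq_iff)
    next
      case False
      then have "m \<notin> M2" using ME by simp
      then show ?thesis using False S1 S2 unfolding Func_def by auto
    qed
    then have "g1 = g2" by (rule ext)
    then show "p1 = p2" using P1 P2 ME by simp
  qed
  have img: "enc p \<in> WW \<kappa> L" if pS: "p \<in> ?S" for p
  proof -
    obtain M g where P: "p = (M, g)" by (cases p)
    have S: "(M,g) \<in> ?S" using pS P by simp
    have MI: "M \<in> Ik \<kappa>" using S by simp
    have sub: "Ms M g \<subseteq> Sigma M (\<lambda>m. insert None (Some ` fst (g m)))" unfolding Ms_def by auto
    have "|Sigma M (\<lambda>m. insert None (Some ` fst (g m)))| <o \<kappa>"
    proof (rule stable_elim[OF st])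
      show "|M| <o \<kappa>" using MI unfolding Ik_def by simp
    next
      fix m assume "m \<in> M"
      then have "|fst (g m)| <o \<kappa>" using gm[OF S] unfolding Ik_def by simp
      then show "|insert None (Some ` fst (g m))| <o \<kappa>" by (rule small_insert[OF C inf small_image])
    qed
    then have "|Ms M g| <o \<kappa>" using small_subset sub by blast
    then have sm: "|\<phi> ` Ms M g| <o \<kappa>" by (rule small_image)
    have fk: "\<phi> ` Ms M g \<subseteq> ?K" using phi(2) MsDOM[OF S] by blast
    have hvF: "hv M g \<in> Func (\<phi> ` Ms M g) L"
      unfolding Func_def mem_Collect_eq
    proof (intro conjI ballI allI impI)
      fix z assume "z \<in> \<phi> ` Ms M g"
      then obtain q where q: "q \<in> Ms M g" "z = \<phi> q" by blast
      have iq: "inv_into (Ms M g) \<phi> z = q" using inv_into_f_f[OF injMs[OF S] q(1)] q(2) by simp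
      show "hv M g z \<in> L"
      proof (cases q)
        case (Pair m oo)
        show ?thesis
        proof (cases oo)
          case None then show ?thesis unfolding hv_def using q iq Pair l0 by simp
        next
          case (Some x)
          then have mx: "m \<in> M" "x \<in> fst (g m)" using q(1) Pair MsS by auto
          have "snd (g m) x \<in> L" using gm[OF S mx(1)] mx(2) unfolding Func_def by auto
          then show ?thesis unfolding hv_def using q iq Pair Some by simp
        qed
      qed
    next
      fix z assume "z \<notin> \<phi> ` Ms M g"
      then show "hv M g z = undefined" unfolding hv_def by simp
    qed
    show ?thesis unfolding P enc_def WW_def Ik_def using sm fk hvF by simp
  qed
  have "enc ` ?S \<subseteq> WW \<kappa> L" using img by blast
  with inj show ?thesis unfolding card_of_ordLeq[symmetric] by blast
qed


lemma small_sets_bound: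
  assumes C: "Card_order \<kappa>" and inf: "\<not> finite (Field \<kappa>)" and st: "stable \<kappa>" and l0: "l0 \<in> L"
    and X: "|X| \<le>o |WW \<kappa> L|"
  shows "|{D. D \<subseteq> X \<and> |D| <o \<kappa>}| \<le>o |WW \<kappa> L|"
proof -
  let ?T = "Sigma (Ik \<kappa>) (\<lambda>M. Func M X)"
  have sub: "{D. D \<subseteq> X \<and> |D| <o \<kappa>} \<subseteq> (\<lambda>p. snd p ` fst p) ` ?T"
  proof
    fix D assume "D \<in> {D. D \<subseteq> X \<and> |D| <o \<kappa>}"
    then have DX: "D \<subseteq> X" and Ds: "|D| <o \<kappa>" by auto
    obtain h where h: "inj_on h D" "h ` D \<subseteq> Field \<kappa>" using inj_into_Field[OF C ordLess_imp_ordLeq[OF Ds]] by blast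
    define M where "M = h ` D"
    define g where "g x = (if x \<in> M then inv_into D h x else undefined)" for x
    have MI: "M \<in> Ik \<kappa>" unfolding Ik_def M_def using h(2) small_image[OF Ds] by simp
    have gF: "g \<in> Func M X" unfolding Func_def g_def M_def using DX inv_into_into[of _ h D] by auto
    have "g ` M = inv_into D h ` M" unfolding g_def by simp
    also have "\<dots> = D" unfolding M_def using h(1) by simp
    finally have "g ` M = D" .
    have "(M,g) \<in> ?T" using MI gF by simp
    then show "D \<in> (\<lambda>p. snd p ` fst p) ` ?T" by (rule rev_image_eqI) (simp add: \<open>g ` M = D\<close>)
  qed
  have 1: "|{D. D \<subseteq> X \<and> |D| <o \<kappa>}| \<le>o |(\<lambda>p. snd p ` fst p) ` ?T|" by (rule card_of_mono1[OF sub])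
  have 2: "|(\<lambda>p. snd p ` fst p) ` ?T| \<le>o |?T|" by (rule card_of_image)
  have 3: "|?T| \<le>o |Sigma (Ik \<kappa>) (\<lambda>M. Func M (WW \<kappa> L))|"
    by (rule card_of_Sigma_mono1) (use Func_mono_cod[OF X] in blast)
  have 4: "|Sigma (Ik \<kappa>) (\<lambda>M. Func M (WW \<kappa> L))| \<le>o |WW \<kappa> L|" by (rule enc_bound[OF C inf st l0])
  show ?thesis by (rule ordLeq_transitive[OF 1 ordLeq_transitive[OF 2 ordLeq_transitive[OF 3 4]]])
qed

lemma WW_infinite_bounds:
  assumes C: "Card_order \<kappa>" and inf: "\<not> finite (Field \<kappa>)" and l0: "l0 \<in> L"
  shows "\<not> finite (WW \<kappa> L)" "|Field \<kappa>| \<le>o |WW \<kappa> L|" "|L| \<le>o |WW \<kappa> L|"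
proof -
  let ?e = "\<lambda>a. ({a}, \<lambda>x. if x = a then l0 else undefined)"
  have sI: "{a} \<in> Ik \<kappa>" if "a \<in> Field \<kappa>" for a
    unfolding Ik_def using that finite_small[OF C inf, of "{a}"] by simp
  have "inj_on ?e (Field \<kappa>)"
  proof (rule inj_onI)
    fix a b assume "?e a = ?e b"
    then have "fst (?e a) = fst (?e b)" by (rule arg_cong)
    then show "a = b" by simp
  qed
  moreover have "?e ` Field \<kappa> \<subseteq> WW \<kappa> L"
    unfolding WW_def using sI l0 unfolding Func_def by (auto split: if_splits)
  ultimately show F: "|Field \<kappa>| \<le>o |WW \<kappa> L|" unfolding card_of_ordLeq[symmetric] by blast
  show "\<not> finite (WW \<kappa> L)" using card_of_ordLeq_finite[OF F] inf by blast
  obtain a0 where a0: "a0 \<in> Field \<kappa>" using inf by (metis finite.emptyI ex_in_conv)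
  let ?e2 = "\<lambda>l. ({a0}, \<lambda>x. if x = a0 then l else undefined)"
  have "inj_on ?e2 L"
  proof (rule inj_onI)
    fix a b assume "?e2 a = ?e2 b"
    then have "snd (?e2 a) a0 = snd (?e2 b) a0" by (rule arg_cong[where f="\<lambda>p. snd p a0"])
    then show "a = b" by simp
  qed
  moreover have "?e2 ` L \<subseteq> WW \<kappa> L"
    unfolding WW_def using sI[OF a0] unfolding Func_def by (auto split: if_splits)
  ultimately show "|L| \<le>o |WW \<kappa> L|" unfolding card_of_ordLeq[symmetric] by blast
qed




locale fnctx =
  fixes \<kappa> :: "'k rel" and f :: "'a::boolean_algebra \<Rightarrow> 'a set" and L :: "'l set" and l0 :: 'l
  assumes C: "Card_order \<kappa>" and inf: "\<not> finite (Field \<kappa>)" and reg: "regularCard \<kappa>"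
    and fsm: "\<And>a. |f a| <o \<kappa>"
    and fn: "\<And>a b. a \<le> b \<Longrightarrow> \<exists>c\<in>f a \<inter> f b. a \<le> c \<and> c \<le> b"
    and l0: "l0 \<in> L"
    and Lb: "\<And>Y. independent (Y::'a set) \<Longrightarrow> |Y| \<le>o |L|"
    and nt: "top \<noteq> (bot::'a)"
begin

lemma st: "stable \<kappa>" using regularCard_stable[OF C inf reg] .

lemma wo: "wo_rel \<kappa>" using C unfolding card_order_on_def wo_rel_def by simp

abbreviation W where "W \<equiv> WW \<kappa> L"

lemma W_inf: "\<not> finite W" using WW_infinite_bounds[OF C inf l0] by blast
lemma FieldW: "|Field \<kappa>| \<le>o |W|" using WW_infinite_bounds[OF C inf l0] by blast
lemma LW: "|L| \<le>o |W|" using WW_infinite_bounds[OF C inf l0] by blast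

lemma smallW: "|A| <o \<kappa> \<Longrightarrow> |A| \<le>o |W|"
  by (rule ordLeq_transitive[OF ordLeq_ordIso_trans[OF ordLess_imp_ordLeq ordIso_symmetric[OF card_of_Field_ordIso[OF C]]] FieldW])

lemma UnW: "|A| \<le>o |W| \<Longrightarrow> |B| \<le>o |W| \<Longrightarrow> |A \<union> B| \<le>o |W|"
  using card_of_Un_ordLeq_infinite_Field[of "|W|" A B] W_inf card_of_card_order_on[of W]
  by (simp add: Field_card_of)

lemma UNW: "|I| \<le>o |W| \<Longrightarrow> (\<And>i. i \<in> I \<Longrightarrow> |A i| \<le>o |W| ) \<Longrightarrow> |\<Union>i\<in>I. A i| \<le>o |W|"
  by (rule card_of_UNION_ordLeq_infinite[OF W_inf]) auto

lemma imageW: "|A| \<le>o |W| \<Longrightarrow> |h ` A| \<le>o |W|"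
  by (rule ordLeq_transitive[OF card_of_image])

lemma TimesW: "|A| \<le>o |W| \<Longrightarrow> |A \<times> A| \<le>o |W|"
  by (rule card_of_Sigma_ordLeq_infinite[OF W_inf]) auto

definition smalls :: "'a set \<Rightarrow> 'a set set" where
  "smalls X = {D. D \<subseteq> X \<and> |D| <o \<kappa>}"

lemma smallsW: "|X| \<le>o |W| \<Longrightarrow> |smalls X| \<le>o |W|"
  unfolding smalls_def by (rule small_sets_bound[OF C inf st l0])

definition G :: "'a set \<Rightarrow> 'a set" where
  "G X = X \<union> {top} \<union> (\<Union>x\<in>X. f x) \<union> (\<lambda>p. inf (fst p) (snd p)) ` (X \<times> X)
     \<union> (\<lambda>p. sup (fst p) (snd p)) ` (X \<times> X) \<union> uminus ` X
     \<union> (\<Union>p\<in>smalls X \<times> smalls X. Domain (famax (fst p) (snd p)))"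

lemma G_ext: "X \<subseteq> G X" unfolding G_def by blast

lemma famaxW: fixes D U :: "'a set" shows "|Domain (famax D U)| \<le>o |W|"
  by (rule ordLeq_transitive[OF Lb[OF fam_indep[OF famax(1) nt]] LW])

lemma G_bound:
  assumes X: "|X| \<le>o |W|"
  shows "|G X| \<le>o |W|"
proof -
  have 1: "|{top::'a}| \<le>o |W|" by (rule smallW[OF finite_small[OF C inf]]) simp
  have 2: "|\<Union>x\<in>X. f x| \<le>o |W|" by (rule UNW[OF X smallW[OF fsm]])
  have 3: "|(\<lambda>p. inf (fst p) (snd p)) ` (X \<times> X)| \<le>o |W|" by (rule imageW[OF TimesW[OF X]])
  have 4: "|(\<lambda>p. sup (fst p) (snd p)) ` (X \<times> X)| \<le>o |W|" by (rule imageW[OF TimesW[OF X]])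
  have 5: "|uminus ` X| \<le>o |W|" by (rule imageW[OF X])
  have 6: "|\<Union>p\<in>smalls X \<times> smalls X. Domain (famax (fst p) (snd p))| \<le>o |W|"
    by (rule UNW[OF TimesW[OF smallsW[OF X]] famaxW])
  show ?thesis unfolding G_def by (intro UnW X 1 2 3 4 5 6)
qed

definition stage :: "'k \<Rightarrow> 'a set" where
  "stage = wo_rel.worec \<kappa> (\<lambda>g \<alpha>. G (\<Union>\<beta>\<in>underS \<kappa> \<alpha>. g \<beta>))"

lemma stage_eq: "stage \<alpha> = G (\<Union>\<beta>\<in>underS \<kappa> \<alpha>. stage \<beta>)"
proof -
  have adm: "wo_rel.adm_wo \<kappa> (\<lambda>g \<alpha>. G (\<Union>\<beta>\<in>underS \<kappa> \<alpha>. g \<beta>))"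
    unfolding wo_rel.adm_wo_def[OF wo] by (auto intro!: arg_cong[where f=G])
  show ?thesis using fun_cong[OF wo_rel.worec_fixpoint[OF wo adm], of \<alpha>] unfolding stage_def by simp
qed

lemma stage_bound: "|stage \<alpha>| \<le>o |W|"
proof (induction \<alpha> rule: wo_rel.well_order_induct[OF wo])
  case (1 x)
  have "|underS \<kappa> x| \<le>o |W|"
    by (rule ordLeq_transitive[OF card_of_mono1 FieldW]) (rule Order_Relation.underS_Field)
  then have "|\<Union>\<beta>\<in>underS \<kappa> x. stage \<beta>| \<le>o |W|"
    by (rule UNW) (use 1 in \<open>auto simp: underS_def\<close>)
  then show ?case unfolding stage_eq[of x] by (rule G_bound)
qed

definition AA :: "'a set" where "AA = (\<Union>\<alpha>\<in>Field \<kappa>. stage \<alpha>)"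

lemma AA_bound: "|AA| \<le>o |W|"
  unfolding AA_def by (rule UNW[OF FieldW stage_bound])

lemma bounded:
  assumes D: "D \<subseteq> AA" "|D| <o \<kappa>"
  shows "\<exists>\<alpha>\<in>Field \<kappa>. D \<subseteq> (\<Union>\<beta>\<in>underS \<kappa> \<alpha>. stage \<beta>)"
proof -
  have ex: "\<forall>x\<in>D. \<exists>\<beta>. \<beta> \<in> Field \<kappa> \<and> x \<in> stage \<beta>" using D(1) unfolding AA_def by blast
  then obtain bt where bt: "\<And>x. x \<in> D \<Longrightarrow> bt x \<in> Field \<kappa> \<and> x \<in> stage (bt x)"
    using bchoice[OF ex] by blast
  let ?K = "bt ` D"
  have KF: "?K \<subseteq> Field \<kappa>" using bt by blast
  have Ks: "|?K| <o \<kappa>" by (rule small_image[OF D(2)])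
  have "\<not> cofinal ?K \<kappa>"
  proof
    assume "cofinal ?K \<kappa>"
    then have "|?K| =o \<kappa>" using reg KF unfolding regularCard_def by blast
    then show False using Ks not_ordLess_ordIso by blast
  qed
  moreover have "Field \<kappa> \<noteq> {}" using inf by auto
  ultimately obtain a where a: "a \<in> Field \<kappa>" and na: "\<forall>b\<in>?K. \<not> (a \<noteq> b \<and> (a,b) \<in> \<kappa>)"
    unfolding cofinal_def by blast
  obtain c where c: "c \<in> Field \<kappa>" "a \<noteq> c" "(a,c) \<in> \<kappa>" using infinite_Card_order_limit[OF C inf a] by blast
  have "b \<in> underS \<kappa> c" if b: "b \<in> ?K" for b
  proof -
    have bF: "b \<in> Field \<kappa>" using b KF by blast
    have "(b,a) \<in> \<kappa>" by (rule wo_rel.in_notinI[OF wo]) (use na b a bF in auto)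
    then have "(b,c) \<in> \<kappa>" using c(3) wo_rel.TRANS[OF wo] unfolding trans_def by blast
    moreover have "b \<noteq> c" using na b c by auto
    ultimately show ?thesis unfolding underS_def by simp
  qed
  then have "D \<subseteq> (\<Union>\<beta>\<in>underS \<kappa> c. stage \<beta>)" using bt by blast
  then show ?thesis using c(1) by blast
qed

lemma stage_AA: "\<alpha> \<in> Field \<kappa> \<Longrightarrow> stage \<alpha> \<subseteq> AA" unfolding AA_def by blast

lemma closure:
  assumes "D \<subseteq> AA" "|D| <o \<kappa>"
  obtains X where "D \<subseteq> X" "G X \<subseteq> AA"
proof -
  obtain \<alpha> where a: "\<alpha> \<in> Field \<kappa>" and D: "D \<subseteq> (\<Union>\<beta>\<in>underS \<kappa> \<alpha>. stage \<beta>)" using bounded[OF assms] by blast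
  have "G (\<Union>\<beta>\<in>underS \<kappa> \<alpha>. stage \<beta>) = stage \<alpha>" by (rule stage_eq[symmetric])
  then have "G (\<Union>\<beta>\<in>underS \<kappa> \<alpha>. stage \<beta>) \<subseteq> AA" using stage_AA[OF a] by simp
  then show thesis by (rule that[OF D])
qed

lemma finsmall: "finite D \<Longrightarrow> |D| <o \<kappa>" by (rule finite_small[OF C inf])

lemma G_top: "top \<in> G X" unfolding G_def by simp
lemma G_inf: "x \<in> X \<Longrightarrow> y \<in> X \<Longrightarrow> inf x y \<in> G X"
proof -
  assume "x \<in> X" "y \<in> X"
  then have "inf x y \<in> (\<lambda>p. inf (fst p) (snd p)) ` (X \<times> X)" by (intro rev_image_eqI[of "(x,y)"]) simp_all
  then show ?thesis unfolding G_def Un_iff by simp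
qed
lemma G_sup: "x \<in> X \<Longrightarrow> y \<in> X \<Longrightarrow> sup x y \<in> G X"
proof -
  assume "x \<in> X" "y \<in> X"
  then have "sup x y \<in> (\<lambda>p. sup (fst p) (snd p)) ` (X \<times> X)" by (intro rev_image_eqI[of "(x,y)"]) simp_all
  then show ?thesis unfolding G_def Un_iff by simp
qed
lemma G_neg: "x \<in> X \<Longrightarrow> - x \<in> G X"
proof -
  assume "x \<in> X"
  then have "- x \<in> uminus ` X" by simp
  then show ?thesis unfolding G_def Un_iff by simp
qed
lemma G_f: "x \<in> X \<Longrightarrow> f x \<subseteq> G X"
proof
  fix z assume "x \<in> X" "z \<in> f x"
  then have "z \<in> (\<Union>x\<in>X. f x)" by blast
  then show "z \<in> G X" unfolding G_def Un_iff by simp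
qed
lemma G_fam: "D \<in> smalls X \<Longrightarrow> U \<in> smalls X \<Longrightarrow> Domain (famax D U) \<subseteq> G X"
proof
  fix z assume "D \<in> smalls X" "U \<in> smalls X" "z \<in> Domain (famax D U)"
  then have "z \<in> (\<Union>p\<in>smalls X \<times> smalls X. Domain (famax (fst p) (snd p)))"
    by (intro UN_I[of "(D,U)"]) simp_all
  then show "z \<in> G X" unfolding G_def Un_iff by simp
qed

lemma AA_top: "top \<in> AA"
proof -
  obtain X where "{} \<subseteq> X" "G X \<subseteq> AA" by (rule closure[OF empty_subsetI finsmall[OF finite.emptyI]])
  then show ?thesis using G_top by blast
qed

lemma AA_inf: "x \<in> AA \<Longrightarrow> y \<in> AA \<Longrightarrow> inf x y \<in> AA"
proof -
  assume xy: "x \<in> AA" "y \<in> AA"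
  have sub: "{x,y} \<subseteq> AA" using xy by simp
  obtain X where X: "{x,y} \<subseteq> X" "G X \<subseteq> AA" by (rule closure[OF sub finsmall]) simp
  then show ?thesis using G_inf[of x X y] by blast
qed

lemma AA_sup: "x \<in> AA \<Longrightarrow> y \<in> AA \<Longrightarrow> sup x y \<in> AA"
proof -
  assume xy: "x \<in> AA" "y \<in> AA"
  have sub: "{x,y} \<subseteq> AA" using xy by simp
  obtain X where X: "{x,y} \<subseteq> X" "G X \<subseteq> AA" by (rule closure[OF sub finsmall]) simp
  then show ?thesis using G_sup[of x X y] by blast
qed

lemma AA_neg: "x \<in> AA \<Longrightarrow> - x \<in> AA"
proof -
  assume x: "x \<in> AA"
  have sub: "{x} \<subseteq> AA" using x by simp
  obtain X where X: "{x} \<subseteq> X" "G X \<subseteq> AA" by (rule closure[OF sub finsmall]) simp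
  then show ?thesis using G_neg[of x X] by blast
qed

lemma AA_f: "x \<in> AA \<Longrightarrow> f x \<subseteq> AA"
proof -
  assume x: "x \<in> AA"
  have sub: "{x} \<subseteq> AA" using x by simp
  obtain X where X: "{x} \<subseteq> X" "G X \<subseteq> AA" by (rule closure[OF sub finsmall]) simp
  then show ?thesis using G_f[of x X] by blast
qed

lemma AA_fam:
  fixes D U :: "'a set"
  assumes "D \<subseteq> AA" "U \<subseteq> AA" "|D| <o \<kappa>" "|U| <o \<kappa>"
  shows "Domain (famax D U) \<subseteq> AA"
proof -
  have "|D \<union> U| <o \<kappa>" by (rule small_Un[OF C inf assms(3,4)])
  moreover have "D \<union> U \<subseteq> AA" using assms(1,2) by simp
  ultimately obtain X where X: "D \<union> U \<subseteq> X" "G X \<subseteq> AA" using closure by blast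
  have "D \<in> smalls X" "U \<in> smalls X" unfolding smalls_def using X(1) assms(3,4) by auto
  then have "Domain (famax D U) \<subseteq> G X" by (rule G_fam)
  then show ?thesis using X(2) by blast
qed

lemma AA_all: "(UNIV :: 'a set) \<subseteq> AA"
proof
  fix b :: 'a
  show "b \<in> AA"
  proof (rule ccontr)
    assume bA: "b \<notin> AA"
    define Dt where "Dt = {c \<in> f b \<inter> AA. c \<le> b}"
    define Ut where "Ut = {c \<in> f b \<inter> AA. b \<le> c}"
    have DtA: "Dt \<subseteq> AA" and UtA: "Ut \<subseteq> AA" unfolding Dt_def Ut_def by auto
    have Dts: "|Dt| <o \<kappa>" by (rule small_subset[OF fsm[of b]]) (auto simp: Dt_def)
    have Uts: "|Ut| <o \<kappa>" by (rule small_subset[OF fsm[of b]]) (auto simp: Ut_def)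
    define Phi where "Phi = famax Dt Ut"
    have Phi: "Phi \<in> fam Dt Ut" unfolding Phi_def by (rule famax(1))
    have DomA: "Domain Phi \<subseteq> AA" unfolding Phi_def by (rule AA_fam[OF DtA UtA Dts Uts])
    have genA: "gen (Domain Phi \<union> Dt \<union> Ut) \<subseteq> AA"
      by (rule gen_closed) (use DomA DtA UtA AA_top AA_inf AA_sup AA_neg in auto)
    have g: "good Dt Ut (Domain Phi) b"
      unfolding good_def
    proof (intro conjI ballI impI)
      show "b \<notin> Dt" using bA DtA by blast
      show "b \<notin> Ut" using bA UtA by blast
    next
      fix d assume "d \<in> Dt" then show "d \<le> b" unfolding Dt_def by simp
    next
      fix u assume "u \<in> Ut" then show "b \<le> u" unfolding Ut_def by simp
    next
      fix a assume aG: "a \<in> gen (Domain Phi \<union> Dt \<union> Ut)" and ab: "a \<le> b"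
      have aA: "a \<in> AA" using aG genA by blast
      obtain c where c: "c \<in> f a \<inter> f b" "a \<le> c" "c \<le> b" using fn[OF ab] by blast
      have "c \<in> AA" using AA_f[OF aA] c(1) by blast
      then have "c \<in> Dt" unfolding Dt_def using c by blast
      then show "\<exists>d\<in>Dt. a \<le> d" using c(2) by blast
    next
      fix a assume aG: "a \<in> gen (Domain Phi \<union> Dt \<union> Ut)" and ba: "b \<le> a"
      have aA: "a \<in> AA" using aG genA by blast
      obtain c where c: "c \<in> f b \<inter> f a" "b \<le> c" "c \<le> a" using fn[OF ba] by blast
      have "c \<in> AA" using AA_f[OF aA] c(1) by blast
      then have "c \<in> Ut" unfolding Ut_def using c by blast
      then show "\<exists>u\<in>Ut. u \<le> a" using c(3) by blast
    qed
    have bD: "b \<notin> Domain Phi" using bA DomA by blast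
    have ext: "insert (b, Domain Phi) Phi \<in> fam Dt Ut" by (rule fam_extend[OF Phi bD g])
    have "insert (b, Domain Phi) Phi = Phi"
      using famax(2)[OF ext[unfolded Phi_def]] unfolding Phi_def by blast
    then have "b \<in> Domain Phi" by blast
    then show False using bD by blast
  qed
qed

theorem main_bound: "|UNIV :: 'a set| \<le>o |WW \<kappa> L|"
  by (rule ordLeq_transitive[OF card_of_mono1[OF AA_all] AA_bound])

end




lemma csup_spec:
  "csup I A \<subseteq> Sigma I A \<and> (\<forall>i\<in>I. |A i| \<le>o |csup I A| ) \<and>
   (\<forall>T'. T' \<subseteq> Sigma I A \<and> (\<forall>i\<in>I. |A i| \<le>o |T'| ) \<longrightarrow> |csup I A| \<le>o |T'| )"
proof -
  let ?UB = "{T. T \<subseteq> Sigma I A \<and> (\<forall>i\<in>I. |A i| \<le>o |T| )}"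
  have ub: "Sigma I A \<in> ?UB"
  proof -
    have "|A i| \<le>o |Sigma I A|" if "i \<in> I" for i
    proof -
      have "inj_on (Pair i) (A i)" by (rule inj_onI) simp
      moreover have "Pair i ` A i \<subseteq> Sigma I A" using that by auto
      ultimately show ?thesis unfolding card_of_ordLeq[symmetric] by blast
    qed
    then show ?thesis by blast
  qed
  obtain r where r: "r \<in> card_of ` ?UB" "\<forall>r'\<in>card_of ` ?UB. r \<le>o r'"
    using exists_minim_Well_order[of "card_of ` ?UB"] ub card_of_Well_order by blast
  then obtain T0 where T0: "T0 \<in> ?UB" "r = |T0|" by blast
  have "\<exists>T. T \<subseteq> Sigma I A \<and> (\<forall>i\<in>I. |A i| \<le>o |T| ) \<and>
      (\<forall>T'. T' \<subseteq> Sigma I A \<and> (\<forall>i\<in>I. |A i| \<le>o |T'| ) \<longrightarrow> |T| \<le>o |T'| )"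
  proof (intro exI conjI allI impI)
    show "T0 \<subseteq> Sigma I A" using T0 by blast
    show "\<forall>i\<in>I. |A i| \<le>o |T0|" using T0 by blast
    fix T' assume "T' \<subseteq> Sigma I A \<and> (\<forall>i\<in>I. |A i| \<le>o |T'| )"
    then have "|T'| \<in> card_of ` ?UB" by blast
    then show "|T0| \<le>o |T'|" using r(2) T0(2) by blast
  qed
  then show ?thesis unfolding csup_def by (rule someI_ex)
qed

definition fsup :: "'a::boolean_algebra set \<Rightarrow> 'a" where
  "fsup X = Finite_Set.fold sup bot X"

lemma fsup_insert:
  assumes "finite X" "x \<notin> X"
  shows "fsup (insert x X) = sup x (fsup X)"
proof -
  interpret comp_fun_commute "sup :: 'a \<Rightarrow> 'a \<Rightarrow> 'a"
    by standard (auto simp: fun_eq_iff sup_left_commute)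
  show ?thesis using assms by (simp add: fsup_def)
qed

lemma le_fsup: "finite X \<Longrightarrow> x \<in> X \<Longrightarrow> x \<le> fsup X"
proof (induction X rule: finite_induct)
  case empty then show ?case by simp
next
  case (insert y X) then show ?case by (auto simp: fsup_insert le_supI2)
qed

lemma fsup_disj: "finite X \<Longrightarrow> (\<forall>x\<in>X. inf t x = bot) \<Longrightarrow> inf t (fsup X) = bot"
proof (induction X rule: finite_induct)
  case empty then show ?case by (simp add: fsup_def)
next
  case (insert y X) then show ?case by (simp add: fsup_insert inf_sup_distrib1)
qed

lemma split_infinite:
  fixes e :: "'a::boolean_algebra"
  assumes "infinite {x. x \<le> e}"
  obtains x where "x \<le> e" "x \<noteq> bot" "inf e (- x) \<noteq> bot"
    "infinite {y. y \<le> x} \<or> infinite {y. y \<le> inf e (- x)}"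
proof -
  have "\<exists>x. x \<le> e \<and> x \<noteq> bot \<and> x \<noteq> e"
  proof (rule ccontr)
    assume "\<not> ?thesis"
    then have "{x. x \<le> e} \<subseteq> {bot, e}" by blast
    then show False using assms finite_subset by blast
  qed
  then obtain x where x: "x \<le> e" "x \<noteq> bot" "x \<noteq> e" by blast
  have ne: "inf e (- x) \<noteq> bot"
  proof
    assume "inf e (- x) = bot"
    then have "e \<le> x" by (simp add: inf_shunt)
    then show False using x by simp
  qed
  have "{y. y \<le> e} \<subseteq> (\<lambda>p. sup (fst p) (snd p)) ` ({y. y \<le> x} \<times> {y. y \<le> inf e (- x)})"
  proof
    fix y assume "y \<in> {y. y \<le> e}"
    then have ye: "y \<le> e" by simp
    have "y = sup (inf y x) (inf y (- x))" by (simp add: inf_sup_distrib1[symmetric])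
    moreover have "inf y (- x) \<le> inf e (- x)" using ye by (rule inf_mono) simp
    ultimately show "y \<in> (\<lambda>p. sup (fst p) (snd p)) ` ({y. y \<le> x} \<times> {y. y \<le> inf e (- x)})"
      by (intro rev_image_eqI[of "(inf y x, inf y (- x))"]) auto
  qed
  then have "infinite {y. y \<le> x} \<or> infinite {y. y \<le> inf e (- x)}"
    using assms finite_subset by blast
  then show thesis using that x ne by blast
qed

lemma disj_family:
  fixes e :: "'a::boolean_algebra"
  assumes "finite Ix"
  shows "infinite {x. x \<le> e} \<Longrightarrow> \<exists>a. (\<forall>i\<in>Ix. a i \<noteq> bot \<and> a i \<le> e) \<and>
           (\<forall>i\<in>Ix. \<forall>j\<in>Ix. i \<noteq> j \<longrightarrow> inf (a i) (a j) = bot)"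
  using assms
proof (induction Ix arbitrary: e rule: finite_induct)
  case empty then show ?case by simp
next
  case (insert i Ix)
  obtain x where x: "x \<le> e" "x \<noteq> bot" "inf e (- x) \<noteq> bot"
    "infinite {y. y \<le> x} \<or> infinite {y. y \<le> inf e (- x)}"
    using split_infinite[OF insert.prems] by blast
  from x(4) show ?case
  proof
    assume inf1: "infinite {y. y \<le> x}"
    obtain a where a: "\<forall>i\<in>Ix. a i \<noteq> bot \<and> a i \<le> x" "\<forall>i\<in>Ix. \<forall>j\<in>Ix. i \<noteq> j \<longrightarrow> inf (a i) (a j) = bot"
      using insert.IH[OF inf1] by blast
    let ?a = "a(i := inf e (- x))"
    have d: "inf (inf e (- x)) (a j) = bot" if "j \<in> Ix" for j
    proof -
      have "a j \<le> x" using a that by blast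
      then have "inf (inf e (- x)) (a j) \<le> inf (- x) x" by (meson inf_le1 inf_le2 inf_mono order_trans)
      then show ?thesis by simp
    qed
    have "\<forall>k\<in>insert i Ix. ?a k \<noteq> bot \<and> ?a k \<le> e" using a(1) x(1,3) insert.hyps(2) by (auto intro: order_trans)
    moreover have "\<forall>k\<in>insert i Ix. \<forall>j\<in>insert i Ix. k \<noteq> j \<longrightarrow> inf (?a k) (?a j) = bot"
      using a(2) d insert.hyps(2) by (auto simp: inf_commute)
    ultimately show ?case by blast
  next
    assume inf2: "infinite {y. y \<le> inf e (- x)}"
    obtain a where a: "\<forall>i\<in>Ix. a i \<noteq> bot \<and> a i \<le> inf e (- x)" "\<forall>i\<in>Ix. \<forall>j\<in>Ix. i \<noteq> j \<longrightarrow> inf (a i) (a j) = bot"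
      using insert.IH[OF inf2] by blast
    let ?a = "a(i := x)"
    have d: "inf x (a j) = bot" if "j \<in> Ix" for j
    proof -
      have "a j \<le> inf e (- x)" using a that by blast
      then have "inf x (a j) \<le> inf x (- x)" by (meson inf_le2 inf_mono order_refl order_trans)
      then show ?thesis by simp
    qed
    have "\<forall>k\<in>insert i Ix. ?a k \<noteq> bot \<and> ?a k \<le> e" using a(1) x(1,2) insert.hyps(2)
      by (auto intro: order_trans[OF _ inf_le1])
    moreover have "\<forall>k\<in>insert i Ix. \<forall>j\<in>insert i Ix. k \<noteq> j \<longrightarrow> inf (?a k) (?a j) = bot"
      using a(2) d insert.hyps(2) by (auto simp: inf_commute)
    ultimately show ?case by blast
  qed
qed


lemma indep_n:
  assumes inf: "infinite (UNIV :: 'a::boolean_algebra set)"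
  shows "\<exists>Y::'a set. independent Y \<and> finite Y \<and> card Y = n"
proof -
  let ?N = "{..<n}"
  have "infinite {x::'a. x \<le> top}" using inf by simp
  then obtain a :: "nat set \<Rightarrow> 'a" where a: "\<forall>i\<in>Pow ?N. a i \<noteq> bot \<and> a i \<le> top"
    "\<forall>i\<in>Pow ?N. \<forall>j\<in>Pow ?N. i \<noteq> j \<longrightarrow> inf (a i) (a j) = bot"
    using disj_family[of "Pow ?N"] by blast
  define y where "y j = fsup (a ` {S \<in> Pow ?N. j \<in> S})" for j
  have ya: "a S \<le> y j" if "S \<in> Pow ?N" "j \<in> S" for S j
    unfolding y_def by (rule le_fsup) (use that in auto)
  have yd: "inf (a S) (y j) = bot" if "S \<in> Pow ?N" "j \<notin> S" for S j
    unfolding y_def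
  proof (rule fsup_disj)
    show "finite (a ` {S \<in> Pow ?N. j \<in> S})" by simp
    show "\<forall>x\<in>a ` {S \<in> Pow ?N. j \<in> S}. inf (a S) x = bot"
    proof
      fix x assume "x \<in> a ` {S \<in> Pow ?N. j \<in> S}"
      then obtain T where T: "T \<in> Pow ?N" "j \<in> T" "x = a T" by blast
      then have "S \<noteq> T" using that by blast
      then show "inf (a S) x = bot" using a(2) T that by blast
    qed
  qed
  have injy: "inj_on y ?N"
  proof (rule inj_onI)
    fix j k assume j: "j \<in> ?N" and k: "k \<in> ?N" and e: "y j = y k"
    show "j = k"
    proof (rule ccontr)
      assume "j \<noteq> k"
      have s: "{j} \<in> Pow ?N" using j by simp
      have "a {j} \<le> y j" by (rule ya[OF s]) simp
      moreover have "inf (a {j}) (y k) = bot" by (rule yd[OF s]) (use \<open>j \<noteq> k\<close> in simp)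
      ultimately have "a {j} = bot" using e by (metis inf.absorb1)
      then show False using a(1) s by blast
    qed
  qed
  let ?Y = "y ` ?N"
  have "independent ?Y"
    unfolding independent_def
  proof (intro allI impI)
    fix F eps assume F: "finite F \<and> F \<subseteq> ?Y"
    define S where "S = {j \<in> ?N. y j \<in> F \<and> eps (y j)}"
    have SP: "S \<in> Pow ?N" unfolding S_def by auto
    have "a S \<le> el_prod F eps" unfolding le_el_prod[of F, OF conjunct1[OF F]]
    proof
      fix z assume z: "z \<in> F"
      then obtain j where j: "j \<in> ?N" "z = y j" using F by blast
      show "a S \<le> sg eps z"
      proof (cases "eps z")
        case True
        then have "j \<in> S" unfolding S_def using j z by simp
        then show ?thesis using ya[OF SP] True j by (simp add: sg_def)
      next
        case False
        then have "j \<notin> S" unfolding S_def using j by simp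
        then have "inf (a S) (y j) = bot" by (rule yd[OF SP])
        then show ?thesis using False j by (simp add: sg_def inf_shunt)
      qed
    qed
    moreover have "a S \<noteq> bot" using a(1) SP by blast
    ultimately show "el_prod F eps \<noteq> bot" by auto
  qed
  moreover have "card ?Y = n" using card_image[OF injy] by simp
  ultimately show ?thesis by blast
qed

lemma Ind_infinite:
  fixes L :: "'l set"
  assumes inf: "infinite (UNIV :: 'a::boolean_algebra set)"
    and Lb: "\<And>Y::'a set. independent Y \<Longrightarrow> |Y| \<le>o |L|"
  shows "infinite L"
proof
  assume fL: "finite L"
  obtain Y :: "'a set" where Y: "independent Y" "finite Y" "card Y = Suc (card L)"
    using indep_n[OF inf] by blast
  obtain h where h: "inj_on h Y" "h ` Y \<subseteq> L" using Lb[OF Y(1)] unfolding card_of_ordLeq[symmetric] by blast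
  have "card Y \<le> card L" using card_inj_on_le[OF h fL] .
  then show False using Y(3) by simp
qed




lemma small_bounded:
  assumes C: "Card_order \<kappa>" and inf: "\<not> finite (Field \<kappa>)" and reg: "regularCard \<kappa>"
    and M: "M \<subseteq> Field \<kappa>" "|M| <o \<kappa>"
  shows "\<exists>a\<in>Field \<kappa>. \<forall>b\<in>M. (b,a) \<in> \<kappa>"
proof -
  have wo: "wo_rel \<kappa>" using C unfolding card_order_on_def wo_rel_def by simp
  have "\<not> cofinal M \<kappa>"
  proof
    assume "cofinal M \<kappa>"
    then have "|M| =o \<kappa>" using reg M(1) unfolding regularCard_def by blast
    then show False using M(2) not_ordLess_ordIso by blast
  qed
  moreover have "Field \<kappa> \<noteq> {}" using inf by auto
  ultimately obtain a where a: "a \<in> Field \<kappa>" and na: "\<forall>b\<in>M. \<not> (a \<noteq> b \<and> (a,b) \<in> \<kappa>)"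
    unfolding cofinal_def by blast
  have "(b,a) \<in> \<kappa>" if b: "b \<in> M" for b
    by (rule wo_rel.in_notinI[OF wo]) (use na b a M(1) in auto)
  then show ?thesis using a by blast
qed

lemma under_Ik:
  assumes C: "Card_order \<kappa>" and inf: "\<not> finite (Field \<kappa>)" and a: "a \<in> Field \<kappa>"
  shows "under \<kappa> a \<in> Ik \<kappa>"
proof -
  have sub: "under \<kappa> a \<subseteq> insert a (underS \<kappa> a)" unfolding under_def underS_def by auto
  have "|insert a (underS \<kappa> a)| <o \<kappa>" by (rule small_insert[OF C inf card_of_underS[OF C a]])
  then have "|under \<kappa> a| <o \<kappa>" by (rule small_subset[OF _ sub])
  moreover have "under \<kappa> a \<subseteq> Field \<kappa>" unfolding under_def by (auto intro: FieldI1)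
  ultimately show ?thesis unfolding Ik_def by simp
qed

lemma Pow_le_Func:
  assumes "l1 \<in> L" "l2 \<in> L" "l1 \<noteq> l2"
  shows "|Pow M| \<le>o |Func M L|"
proof -
  let ?F = "\<lambda>S x. if x \<in> M then (if x \<in> S then l1 else l2) else undefined"
  have "inj_on ?F (Pow M)"
  proof (rule inj_onI)
    fix S T assume ST: "S \<in> Pow M" "T \<in> Pow M" "?F S = ?F T"
    show "S = T"
    proof (rule set_eqI)
      fix x
      show "x \<in> S \<longleftrightarrow> x \<in> T"
      proof (cases "x \<in> M")
        case True
        have "?F S x = ?F T x" by (rule fun_cong[OF ST(3)])
        then have "(if x \<in> S then l1 else l2) = (if x \<in> T then l1 else l2)" using True by simp
        then show ?thesis using assms(3) by (auto split: if_splits)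
      next
        case False then show ?thesis using ST(1,2) by auto
      qed
    qed
  qed
  moreover have "?F ` Pow M \<subseteq> Func M L" unfolding Func_def using assms by auto
  ultimately show ?thesis unfolding card_of_ordLeq[symmetric] by blast
qed

lemma Func_dom_mono:
  assumes "|M| \<le>o |M0|" "l0 \<in> L"
  shows "|Func M L| \<le>o |Func M0 L|"
proof -
  obtain e where e: "inj_on e M" "e ` M \<subseteq> M0" using assms(1) unfolding card_of_ordLeq[symmetric] by blast
  let ?F = "\<lambda>h y. if y \<in> e ` M then h (inv_into M e y) else if y \<in> M0 then l0 else undefined"
  have "inj_on ?F (Func M L)"
  proof (rule inj_onI)
    fix h1 h2 assume h: "h1 \<in> Func M L" "h2 \<in> Func M L" "?F h1 = ?F h2"
    show "h1 = h2"
    proof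
      fix x show "h1 x = h2 x"
      proof (cases "x \<in> M")
        case True
        have "?F h1 (e x) = ?F h2 (e x)" by (rule fun_cong[OF h(3)])
        then show ?thesis using True inv_into_f_f[OF e(1) True] by simp
      next
        case False then show ?thesis using h(1,2) unfolding Func_def by auto
      qed
    qed
  qed
  moreover have "?F ` Func M L \<subseteq> Func M0 L"
  proof
    fix g assume "g \<in> ?F ` Func M L"
    then obtain h where h: "h \<in> Func M L" "g = ?F h" by blast
    have "h (inv_into M e y) \<in> L" if "y \<in> e ` M" for y
      using h(1) inv_into_into[OF that] unfolding Func_def by blast
    then show "g \<in> Func M0 L" unfolding Func_def h(2) using e(2) assms(2) by auto
  qed
  ultimately show ?thesis unfolding card_of_ordLeq[symmetric] by blast
qed

lemma WW_le_csup:
  assumes C: "Card_order \<kappa>" and inf: "\<not> finite (Field \<kappa>)" and reg: "regularCard \<kappa>"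
    and Linf: "\<not> finite L"
  shows "|WW \<kappa> L| \<le>o |csup (Ik \<kappa>) (\<lambda>M. Func M L)|"
proof -
  let ?P = "csup (Ik \<kappa>) (\<lambda>M. Func M L)"
  have ub: "\<And>M. M \<in> Ik \<kappa> \<Longrightarrow> |Func M L| \<le>o |?P|" using csup_spec[of "Ik \<kappa>" "\<lambda>M. Func M L"] by blast
  obtain l1 where l1: "l1 \<in> L" using Linf by (metis finite.emptyI ex_in_conv)
  have "\<not> finite (L - {l1})" using Linf by simp
  then obtain l2 where l2: "l2 \<in> L" "l2 \<noteq> l1" by (metis Diff_iff finite.emptyI ex_in_conv singletonI)
  obtain a0 where a0: "a0 \<in> Field \<kappa>" using inf by (metis finite.emptyI ex_in_conv)
  have Pinf: "\<not> finite ?P"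
  proof -
    have "|L| \<le>o |WW \<kappa> L|" using WW_infinite_bounds[OF C inf l1] by blast
    have "{a0} \<in> Ik \<kappa>" unfolding Ik_def using a0 finite_small[OF C inf, of "{a0}"] by simp
    have e2: "|L| \<le>o |Func {a0} L|"
    proof -
      let ?e2 = "\<lambda>l x. if x = a0 then l else undefined"
      have "inj_on ?e2 L"
      proof (rule inj_onI)
        fix a b assume "?e2 a = ?e2 b"
        then have "?e2 a a0 = ?e2 b a0" by (rule fun_cong)
        then show "a = b" by simp
      qed
      moreover have "?e2 ` L \<subseteq> Func {a0} L" unfolding Func_def by auto
      ultimately show ?thesis unfolding card_of_ordLeq[symmetric] by blast
    qed
    have "|L| \<le>o |?P|" by (rule ordLeq_transitive[OF e2 ub[OF \<open>{a0} \<in> Ik \<kappa>\<close>]])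
    then show ?thesis using card_of_ordLeq_finite Linf by blast
  qed
  have FP: "|Field \<kappa>| \<le>o |?P|"
  proof (rule ccontr)
    assume "\<not> |Field \<kappa>| \<le>o |?P|"
    then have lt: "|?P| <o |Field \<kappa>|" using not_ordLeq_iff_ordLess[OF card_of_Well_order card_of_Well_order] by blast
    then obtain h where h: "inj_on h ?P" "h ` ?P \<subseteq> Field \<kappa>"
      using ordLess_imp_ordLeq[OF lt] unfolding card_of_ordLeq[symmetric] by blast
    define M where "M = h ` ?P"
    have iso: "|?P| =o |M|" unfolding M_def card_of_ordIso[symmetric] using h(1) inj_on_imp_bij_betw by blast
    have "|M| \<le>o |?P|" unfolding M_def by (rule card_of_image)
    then have "|M| <o |Field \<kappa>|" using lt ordLeq_ordLess_trans by blast
    then have "|M| <o \<kappa>" using card_of_Field_ordIso[OF C] ordLess_ordIso_trans by blast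
    moreover have "M \<subseteq> Field \<kappa>" unfolding M_def by (rule h(2))
    ultimately have MI: "M \<in> Ik \<kappa>" by (simp add: Ik_def)
    have "|Pow M| \<le>o |Func M L|" by (rule Pow_le_Func[OF l1 l2(1) l2(2)[symmetric]])
    then have "|Pow M| \<le>o |?P|" using ub[OF MI] ordLeq_transitive by blast
    then have "|Pow M| \<le>o |M|" using iso ordLeq_ordIso_trans by blast
    then show False using card_of_Pow[of M] not_ordLess_ordLeq by blast
  qed
  have IP: "|Ik \<kappa>| \<le>o |?P|"
  proof -
    have sub: "Ik \<kappa> \<subseteq> (\<Union>a\<in>Field \<kappa>. Pow (under \<kappa> a))"
    proof
      fix M assume "M \<in> Ik \<kappa>"
      then have M: "M \<subseteq> Field \<kappa>" "|M| <o \<kappa>" unfolding Ik_def by auto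
      obtain a where "a \<in> Field \<kappa>" "\<forall>b\<in>M. (b,a) \<in> \<kappa>" using small_bounded[OF C inf reg M] by blast
      then show "M \<in> (\<Union>a\<in>Field \<kappa>. Pow (under \<kappa> a))" unfolding under_def by blast
    qed
    have "|\<Union>a\<in>Field \<kappa>. Pow (under \<kappa> a)| \<le>o |?P|"
    proof (rule card_of_UNION_ordLeq_infinite[OF Pinf FP], intro ballI)
      fix a assume a: "a \<in> Field \<kappa>"
      have "|Pow (under \<kappa> a)| \<le>o |Func (under \<kappa> a) L|" by (rule Pow_le_Func[OF l1 l2(1) l2(2)[symmetric]])
      then show "|Pow (under \<kappa> a)| \<le>o |?P|" using ub[OF under_Ik[OF C inf a]] ordLeq_transitive by blast
    qed
    then show ?thesis using card_of_mono1[OF sub] ordLeq_transitive by blast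
  qed
  show ?thesis unfolding WW_def by (rule card_of_Sigma_ordLeq_infinite[OF Pinf IP]) (use ub in blast)
qed




lemma cardSuc_bound:
  assumes l0: "l0 \<in> L"
  shows "|csup (Ik (cardSuc natLeq)) (\<lambda>M. Func M L)| \<le>o |Func (UNIV::nat set) L|"
proof -
  let ?k = "cardSuc natLeq"
  let ?P = "csup (Ik ?k) (\<lambda>M. Func M L)"
  have Ck: "Card_order ?k" by (rule cardSuc_Card_order[OF natLeq_Card_order])
  have infk: "\<not> finite (Field ?k)"
    using Cinfinite_cardSuc[of natLeq] natLeq_cinfinite natLeq_Card_order by (simp add: cinfinite_def)
  obtain g :: "nat \<Rightarrow> _" where g: "inj g" "range g \<subseteq> Field ?k" using infinite_countable_subset[OF infk] by blast
  define M0 where "M0 = range g"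
  have M0nat: "|M0| \<le>o |UNIV::nat set|" unfolding M0_def by (rule card_of_image)
  have natM0: "|UNIV::nat set| \<le>o |M0|" unfolding M0_def card_of_ordLeq[symmetric] using g(1) by blast
  have natk: "|UNIV::nat set| <o ?k"
    by (rule ordIso_ordLess_trans[OF card_of_nat cardSuc_greater[OF natLeq_Card_order]])
  have M0I: "M0 \<in> Ik ?k" unfolding Ik_def M0_def using g(2) ordLeq_ordLess_trans[OF M0nat[unfolded M0_def] natk] by simp
  let ?T = "{M0} \<times> Func M0 L"
  have Tsub: "?T \<subseteq> Sigma (Ik ?k) (\<lambda>M. Func M L)" using M0I by auto
  have TM0: "|Func M0 L| \<le>o |?T|"
  proof -
    have "inj_on (Pair M0) (Func M0 L)" by (rule inj_onI) simp
    moreover have "Pair M0 ` Func M0 L \<subseteq> ?T" by auto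
    ultimately show ?thesis unfolding card_of_ordLeq[symmetric] by blast
  qed
  have Tub: "\<forall>M\<in>Ik ?k. |Func M L| \<le>o |?T|"
  proof
    fix M assume "M \<in> Ik ?k"
    then have "|M| <o ?k" unfolding Ik_def by simp
    then have "|M| \<le>o natLeq" using cardSuc_ordLeq_ordLess[OF natLeq_Card_order card_of_Card_order] by blast
    then have "|M| \<le>o |UNIV::nat set|" using card_of_nat ordIso_symmetric ordLeq_ordIso_trans by blast
    then have "|M| \<le>o |M0|" using natM0 ordLeq_transitive by blast
    then have "|Func M L| \<le>o |Func M0 L|" by (rule Func_dom_mono[OF _ l0])
    then show "|Func M L| \<le>o |?T|" using TM0 ordLeq_transitive by blast
  qed
  have a: "|?P| \<le>o |?T|" using csup_spec[of "Ik ?k" "\<lambda>M. Func M L"] Tsub Tub by blast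
  have b: "|?T| \<le>o |Func M0 L|"
  proof -
    have "inj_on snd ?T" by (rule inj_onI) auto
    moreover have "snd ` ?T \<subseteq> Func M0 L" by auto
    ultimately show ?thesis unfolding card_of_ordLeq[symmetric] by blast
  qed
  have c: "|Func M0 L| \<le>o |Func (UNIV::nat set) L|" by (rule Func_dom_mono[OF M0nat l0])
  show ?thesis by (rule ordLeq_transitive[OF a ordLeq_transitive[OF b c]])
qed

lemma part1:
  fixes \<kappa> :: "'k rel"
  assumes inf: "infinite (UNIV :: 'a::boolean_algebra set)"
    and C: "Card_order \<kappa>" and ci: "cinfinite \<kappa>" and reg: "regularCard \<kappa>" and fnp: "kappa_FN \<kappa> TYPE('a)"
  shows "|UNIV :: 'a set| \<le>o |cpow_less (Ind_set TYPE('a)) \<kappa>|"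
proof -
  let ?L = "Ind_set TYPE('a)"
  have infk: "\<not> finite (Field \<kappa>)" using ci unfolding cinfinite_def .
  obtain f :: "'a \<Rightarrow> 'a set" where f1: "\<forall>a. |f a| <o \<kappa>"
    and f2: "\<forall>a b. a \<le> b \<longrightarrow> (\<exists>c \<in> f a \<inter> f b. a \<le> c \<and> c \<le> b)"
    using fnp unfolding kappa_FN_def by blast
  have nt: "top \<noteq> (bot::'a)"
  proof
    assume tb: "top = (bot::'a)"
    have "\<And>x::'a. x = bot" using tb by (metis bot_unique top_greatest)
    then have "(UNIV::'a set) \<subseteq> {bot}" by blast
    then show False using inf finite_subset by blast
  qed
  have Lb: "\<And>Y::'a set. independent Y \<Longrightarrow> |Y| \<le>o |?L|"
    using csup_spec[of "{Y::'a set. independent Y}" "\<lambda>Y. Y"] unfolding Ind_set_def by auto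
  have Linf: "infinite ?L" by (rule Ind_infinite[OF inf Lb])
  obtain l0 where l0: "l0 \<in> ?L" using Linf by (metis finite.emptyI ex_in_conv)
  interpret fnctx \<kappa> f ?L l0
    by unfold_locales (use C infk reg f1 f2 l0 Lb nt in auto)
  have "|UNIV :: 'a set| \<le>o |WW \<kappa> ?L|" by (rule main_bound)
  moreover have "|WW \<kappa> ?L| \<le>o |csup (Ik \<kappa>) (\<lambda>M. Func M ?L)|" by (rule WW_le_csup[OF C infk reg Linf])
  moreover have "cpow_less ?L \<kappa> = csup (Ik \<kappa>) (\<lambda>M. Func M ?L)" by (simp add: cpow_less_def Ik_def)
  ultimately show ?thesis using ordLeq_transitive by metis
qed

theorem corollary4p3:
  fixes \<kappa> :: "'k rel"
  assumes "infinite (UNIV :: 'a::boolean_algebra set)"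
  shows "(Card_order \<kappa> \<and> cinfinite \<kappa> \<and> regularCard \<kappa> \<and> kappa_FN \<kappa> TYPE('a)
            \<longrightarrow> |UNIV :: 'a set| \<le>o |cpow_less (Ind_set TYPE('a)) \<kappa>| )
       \<and> (kappa_FN (cardSuc natLeq) TYPE('a)
            \<longrightarrow> |UNIV :: 'a set| \<le>o |Func (UNIV :: nat set) (Ind_set TYPE('a))| )"
proof (intro conjI impI)
  assume "Card_order \<kappa> \<and> cinfinite \<kappa> \<and> regularCard \<kappa> \<and> kappa_FN \<kappa> TYPE('a)"
  then show "|UNIV :: 'a set| \<le>o |cpow_less (Ind_set TYPE('a)) \<kappa>|"
    using part1[OF assms] by blast
next
  assume fn1: "kappa_FN (cardSuc natLeq) TYPE('a)"
  let ?k = "cardSuc natLeq"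
  let ?L = "Ind_set TYPE('a)"
  have Ck: "Card_order ?k" by (rule cardSuc_Card_order[OF natLeq_Card_order])
  have ck: "cinfinite ?k"
    using Cinfinite_cardSuc[of natLeq] natLeq_cinfinite natLeq_Card_order by simp
  have rk: "regularCard ?k" by (rule regularCard_cardSuc) (use natLeq_cinfinite natLeq_Card_order in simp)
  have 1: "|UNIV :: 'a set| \<le>o |cpow_less ?L ?k|" by (rule part1[OF assms Ck ck rk fn1])
  have Lb: "\<And>Y::'a set. independent Y \<Longrightarrow> |Y| \<le>o |?L|"
    using csup_spec[of "{Y::'a set. independent Y}" "\<lambda>Y. Y"] unfolding Ind_set_def by auto
  have Linf: "infinite ?L" by (rule Ind_infinite[OF assms Lb])
  obtain l0 where l0: "l0 \<in> ?L" using Linf by (metis finite.emptyI ex_in_conv)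
  have "cpow_less ?L ?k = csup (Ik ?k) (\<lambda>M. Func M ?L)" by (simp add: cpow_less_def Ik_def)
  then have 2: "|cpow_less ?L ?k| \<le>o |Func (UNIV::nat set) ?L|" using cardSuc_bound[OF l0] by simp
  show "|UNIV :: 'a set| \<le>o |Func (UNIV :: nat set) ?L|" by (rule ordLeq_transitive[OF 1 2])
qed


end
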